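(* Let $\langle A,\to\rangle$ be a conditional algebra and let $B$ be (the domain of) a Boolean subalgebra of $A$. Then the following are equivalent: (1) $E_B$ is a C-equivalence on the expanded Stone space $\langle\mathrm{Ul}(A),\tau_s,T_A\rangle$; (2) $B$ is closed under $\to$, i.e., $\langle B,\to\rangle$ is a subalgebra of $\langle A,\to\rangle$.
   Context: A conditional algebra is $\langle A,\to\rangle$ with $A$ a Boolean algebra and $\to$ binary with $a\to1=1$, $(a\to b)\wedge(a\to c)=a\to(b\wedge c)$, $(a\vee b)\to c\le(a\to c)\wedge(b\to c)$. $\mathrm{Ul}(A)$ is the Stone space of ultrafilters (closed sets are exactly the sets $\varphi(F)=\{u:F\subseteq u\}$, $F$ a filter, the improper filter $A$ included). $D^{\to}_u(F)=\{b:\exists a\in F,\ a\to b\in u\}$; $T_A(u,Z,v)$ iff there is a filter $F$ with $Z=\varphi(F)$ and $D^{\to}_u(F)\subseteq v$. $E_B=\{(u,v)\in\mathrm{Ul}(A)^2: u\cap B=v\cap B\}$. For an equivalence $E$ on a space $X$ with relation $T$ and closed sets $Y,C$: $Y\preceq_E C$ iff for every $y\in Y$ there is $x\in C$ with $E(x,y)$. $E$ is a C-equivalence if $E$ is a Boolean equivalence (for each $(x,y)\notin E$ there is a clopen set closed under $E$ containing $x$ but not $y$) and for all $x,x',y\in X$ and closed $Y$, if $E(x,y)$ and $T(x,Y,x')$ then there exist $y'$ with $E(x',y')$ and closed $C$ with $T(y,C,y')$ and $C\preceq_E Y$. *)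

theory Defs
  imports Main
begin

definition conditional_algebra :: "('a::boolean_algebra \<Rightarrow> 'a \<Rightarrow> 'a) \<Rightarrow> bool" where
  "conditional_algebra imp \<longleftrightarrow>
     (\<forall>a. imp a top = top) \<and>
     (\<forall>a b c. inf (imp a b) (imp a c) = imp a (inf b c)) \<and>
     (\<forall>a b c. imp (sup a b) c \<le> inf (imp a c) (imp b c))"

definition boolean_subalgebra :: "'a::boolean_algebra set \<Rightarrow> bool" where
  "boolean_subalgebra B \<longleftrightarrow> bot \<in> B \<and> top \<in> B \<and>
     (\<forall>a\<in>B. \<forall>b\<in>B. inf a b \<in> B \<and> sup a b \<in> B) \<and> (\<forall>a\<in>B. - a \<in> B)"

text \<open>Filters (the improper filter UNIV included).\<close>
definition ba_filter :: "'a::boolean_algebra set \<Rightarrow> bool" where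
  "ba_filter F \<longleftrightarrow> top \<in> F \<and> (\<forall>a\<in>F. \<forall>b. a \<le> b \<longrightarrow> b \<in> F) \<and>
     (\<forall>a\<in>F. \<forall>b\<in>F. inf a b \<in> F)"

definition proper_filter :: "'a::boolean_algebra set \<Rightarrow> bool" where
  "proper_filter F \<longleftrightarrow> ba_filter F \<and> bot \<notin> F"

definition ultrafilter :: "'a::boolean_algebra set \<Rightarrow> bool" where
  "ultrafilter u \<longleftrightarrow> proper_filter u \<and> (\<forall>G. proper_filter G \<and> u \<subseteq> G \<longrightarrow> G = u)"

definition Ul :: "'a::boolean_algebra set set" where
  "Ul = {u. ultrafilter u}"

definition phi :: "'a::boolean_algebra set \<Rightarrow> 'a set set" where
  "phi F = {u \<in> Ul. F \<subseteq> u}"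

definition stone_closed :: "'a::boolean_algebra set set \<Rightarrow> bool" where
  "stone_closed Z \<longleftrightarrow> (\<exists>F. ba_filter F \<and> Z = phi F)"

definition D_imp :: "('a::boolean_algebra \<Rightarrow> 'a \<Rightarrow> 'a) \<Rightarrow> 'a set \<Rightarrow> 'a set \<Rightarrow> 'a set" where
  "D_imp imp u F = {b. \<exists>a\<in>F. imp a b \<in> u}"

definition T_A :: "('a::boolean_algebra \<Rightarrow> 'a \<Rightarrow> 'a) \<Rightarrow> 'a set \<Rightarrow> 'a set set \<Rightarrow> 'a set \<Rightarrow> bool" where
  "T_A imp u Z v \<longleftrightarrow> (\<exists>F. ba_filter F \<and> Z = phi F \<and> D_imp imp u F \<subseteq> v)"

definition E_B :: "'a::boolean_algebra set \<Rightarrow> ('a set \<times> 'a set) set" where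
  "E_B B = {(u, v). u \<in> Ul \<and> v \<in> Ul \<and> u \<inter> B = v \<inter> B}"

definition clopen_in :: "'x set \<Rightarrow> ('x set \<Rightarrow> bool) \<Rightarrow> 'x set \<Rightarrow> bool" where
  "clopen_in X closed S \<longleftrightarrow> S \<subseteq> X \<and> closed S \<and> closed (X - S)"

definition E_below :: "('x \<times> 'x) set \<Rightarrow> 'x set \<Rightarrow> 'x set \<Rightarrow> bool" where
  "E_below E Y C \<longleftrightarrow> (\<forall>y\<in>Y. \<exists>x\<in>C. (x, y) \<in> E)"

definition boolean_equivalence :: "'x set \<Rightarrow> ('x set \<Rightarrow> bool) \<Rightarrow> ('x \<times> 'x) set \<Rightarrow> bool" where
  "boolean_equivalence X closed E \<longleftrightarrow> equiv X E \<and>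
     (\<forall>x\<in>X. \<forall>y\<in>X. (x, y) \<notin> E \<longrightarrow>
        (\<exists>S. clopen_in X closed S \<and> (\<forall>p q. (p, q) \<in> E \<longrightarrow> p \<in> S \<longrightarrow> q \<in> S)
             \<and> x \<in> S \<and> y \<notin> S))"

definition C_equivalence ::
  "'x set \<Rightarrow> ('x set \<Rightarrow> bool) \<Rightarrow> ('x \<Rightarrow> 'x set \<Rightarrow> 'x \<Rightarrow> bool) \<Rightarrow> ('x \<times> 'x) set \<Rightarrow> bool" where
  "C_equivalence X closed T E \<longleftrightarrow> boolean_equivalence X closed E \<and>
     (\<forall>x\<in>X. \<forall>x'\<in>X. \<forall>y\<in>X. \<forall>Y. closed Y \<longrightarrow> (x, y) \<in> E \<longrightarrow> T x Y x' \<longrightarrow>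
        (\<exists>y'\<in>X. \<exists>C. (x', y') \<in> E \<and> closed C \<and> T y C y' \<and> E_below E C Y))"

end

theory Submission
  imports Defs
begin

lemma chain_union_proper:
  assumes "C \<noteq> {}" "\<forall>X\<in>C. proper_filter X" "chain\<^sub>\<subseteq> C"
  shows "proper_filter (\<Union>C)"
proof -
  have ftop: "X \<in> C \<Longrightarrow> top \<in> X" for X using assms(2) unfolding proper_filter_def ba_filter_def by simp
  have fup: "X \<in> C \<Longrightarrow> a \<in> X \<Longrightarrow> a \<le> b \<Longrightarrow> b \<in> X" for X a b
    using assms(2) unfolding proper_filter_def ba_filter_def by simp
  have finf: "X \<in> C \<Longrightarrow> a \<in> X \<Longrightarrow> b \<in> X \<Longrightarrow> inf a b \<in> X" for X a b
    using assms(2) unfolding proper_filter_def ba_filter_def by simp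
  have fbot: "X \<in> C \<Longrightarrow> bot \<notin> X" for X using assms(2) unfolding proper_filter_def by simp
  obtain X0 where "X0 \<in> C" using assms(1) by auto
  then have top: "top \<in> \<Union>C" using ftop by auto
  have up: "\<forall>a\<in>\<Union>C. \<forall>b. a \<le> b \<longrightarrow> b \<in> \<Union>C"
  proof (intro ballI allI impI)
    fix a b assume "a \<in> \<Union>C" "a \<le> b"
    then obtain X where "X \<in> C" "a \<in> X" by auto
    then show "b \<in> \<Union>C" using fup \<open>a \<le> b\<close> by auto
  qed
  have meet: "\<forall>a\<in>\<Union>C. \<forall>b\<in>\<Union>C. inf a b \<in> \<Union>C"
  proof (intro ballI)
    fix a b assume "a \<in> \<Union>C" "b \<in> \<Union>C"
    then obtain X Y where XY: "X \<in> C" "Y \<in> C" "a \<in> X" "b \<in> Y" by auto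
    from assms(3) XY(1,2) have "X \<subseteq> Y \<or> Y \<subseteq> X" unfolding chain_subset_def by simp
    then show "inf a b \<in> \<Union>C"
    proof
      assume "X \<subseteq> Y"
      then have "inf a b \<in> Y" using XY finf by auto
      then show ?thesis using XY by auto
    next
      assume "Y \<subseteq> X"
      then have "inf a b \<in> X" using XY finf by auto
      then show ?thesis using XY by auto
    qed
  qed
  have "bot \<notin> \<Union>C" using fbot by auto
  then show ?thesis using top up meet unfolding proper_filter_def ba_filter_def by simp
qed

lemma ultra_ext:
  assumes "proper_filter F" shows "\<exists>u. ultrafilter u \<and> F \<subseteq> u"
proof -
  let ?A = "{G. proper_filter G \<and> F \<subseteq> G}"
  have "\<forall>C\<in>chains ?A. \<exists>U\<in>?A. \<forall>X\<in>C. X \<subseteq> U"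
  proof
    fix C assume C: "C \<in> chains ?A"
    show "\<exists>U\<in>?A. \<forall>X\<in>C. X \<subseteq> U"
    proof (cases "C = {}")
      case True then show ?thesis using assms by blast
    next
      case False
      have "proper_filter (\<Union>C)" using chain_union_proper[OF False] C unfolding chains_def by blast
      moreover have "F \<subseteq> \<Union>C" using False C unfolding chains_def by blast
      ultimately show ?thesis by blast
    qed
  qed
  from Zorn_Lemma2[OF this] obtain M where M: "M \<in> ?A" "\<forall>X\<in>?A. M \<subseteq> X \<longrightarrow> X = M" by blast
  have "ultrafilter M" unfolding ultrafilter_def
  proof (intro conjI allI impI)
    show "proper_filter M" using M by blast
    fix G assume "proper_filter G \<and> M \<subseteq> G"
    then show "G = M" using M by blast
  qed
  then show ?thesis using M by blast
qed

definition meet_closed :: "'a::boolean_algebra set \<Rightarrow> bool" where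
  "meet_closed S \<longleftrightarrow> top \<in> S \<and> (\<forall>a\<in>S. \<forall>b\<in>S. inf a b \<in> S)"

lemma filter_meet_closed: "ba_filter F \<Longrightarrow> meet_closed F"
  unfolding ba_filter_def meet_closed_def by blast

lemma ultra_ext2:
  fixes P Q :: "'a::boolean_algebra set"
  assumes "meet_closed P" "meet_closed Q" "\<forall>p\<in>P. \<forall>q\<in>Q. inf p q \<noteq> bot"
  shows "\<exists>u\<in>Ul. P \<subseteq> u \<and> Q \<subseteq> u"
proof -
  let ?G = "{z. \<exists>p\<in>P. \<exists>q\<in>Q. inf p q \<le> z}"
  have "proper_filter ?G" unfolding proper_filter_def ba_filter_def
  proof (intro conjI)
    show "top \<in> ?G" using assms(1,2) unfolding meet_closed_def by auto
    show "\<forall>a\<in>?G. \<forall>b. a \<le> b \<longrightarrow> b \<in> ?G" using order_trans by blast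
    show "\<forall>a\<in>?G. \<forall>b\<in>?G. inf a b \<in> ?G"
    proof (intro ballI)
      fix a b assume "a \<in> ?G" "b \<in> ?G"
      then obtain p1 q1 p2 q2 where h: "p1 \<in> P" "q1 \<in> Q" "inf p1 q1 \<le> a" "p2 \<in> P" "q2 \<in> Q" "inf p2 q2 \<le> b"
        by blast
      have "inf p1 p2 \<in> P" "inf q1 q2 \<in> Q" using h assms(1,2) unfolding meet_closed_def by auto
      moreover have "inf (inf p1 p2) (inf q1 q2) \<le> inf a b"
        using h by (meson inf.bounded_iff inf_le1 inf_le2 order_trans)
      ultimately show "inf a b \<in> ?G" by blast
    qed
    show "bot \<notin> ?G" using assms(3) bot_unique by blast
  qed
  from ultra_ext[OF this] obtain u where u: "ultrafilter u" "?G \<subseteq> u" by (elim exE conjE)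
  have "P \<subseteq> ?G"
  proof
    fix p assume "p \<in> P"
    moreover have "top \<in> Q" using assms(2) unfolding meet_closed_def by blast
    moreover have "inf p top \<le> p" by simp
    ultimately show "p \<in> ?G" by blast
  qed
  moreover have "Q \<subseteq> ?G"
  proof
    fix q assume "q \<in> Q"
    moreover have "top \<in> P" using assms(1) unfolding meet_closed_def by blast
    moreover have "inf top q \<le> q" by simp
    ultimately show "q \<in> ?G" by blast
  qed
  ultimately have "P \<subseteq> u \<and> Q \<subseteq> u" using u(2) by (meson subset_trans)
  moreover have "u \<in> Ul" using u(1) unfolding Ul_def by simp
  ultimately show ?thesis by (rule_tac bexI)
qed

lemma ultra_compl:
  assumes "u \<in> Ul" shows "a \<in> u \<or> - a \<in> u"
proof (rule ccontr)
  assume n: "\<not> (a \<in> u \<or> - a \<in> u)"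
  have uf: "ultrafilter u" using assms unfolding Ul_def by blast
  let ?G = "{z. \<exists>f\<in>u. inf f a \<le> z}"
  have "proper_filter ?G" unfolding proper_filter_def ba_filter_def
  proof (intro conjI)
    have "top \<in> u" using uf unfolding ultrafilter_def proper_filter_def ba_filter_def by blast
    then show "top \<in> ?G" by auto
    show "\<forall>x\<in>?G. \<forall>b. x \<le> b \<longrightarrow> b \<in> ?G" using order_trans by blast
    show "\<forall>x\<in>?G. \<forall>b\<in>?G. inf x b \<in> ?G"
    proof (intro ballI)
      fix x b assume "x \<in> ?G" "b \<in> ?G"
      then obtain f1 f2 where h: "f1 \<in> u" "inf f1 a \<le> x" "f2 \<in> u" "inf f2 a \<le> b" by blast
      have "inf f1 f2 \<in> u" using h uf unfolding ultrafilter_def proper_filter_def ba_filter_def by blast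
      moreover have "inf (inf f1 f2) a \<le> inf x b" using h by (meson inf.bounded_iff inf_le1 inf_le2 order_trans)
      ultimately show "inf x b \<in> ?G" by blast
    qed
    show "bot \<notin> ?G"
    proof
      assume "bot \<in> ?G"
      then obtain f where "f \<in> u" "inf f a \<le> bot" by blast
      then have "f \<le> - a" by (simp add: inf_shunt bot_unique)
      then have "- a \<in> u" using \<open>f \<in> u\<close> uf unfolding ultrafilter_def proper_filter_def ba_filter_def by blast
      then show False using n by blast
    qed
  qed
  moreover have "u \<subseteq> ?G" using inf_le1 by blast
  ultimately have "?G = u" using uf unfolding ultrafilter_def by blast
  moreover have "a \<in> ?G"
  proof -
    have "top \<in> u" using uf unfolding ultrafilter_def proper_filter_def ba_filter_def by blast
    moreover have "inf top a \<le> a" by simp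
    ultimately show ?thesis by blast
  qed
  ultimately show False using n by blast
qed

lemma ultra_not_both:
  assumes "u \<in> Ul" "a \<in> u" "- a \<in> u" shows False
proof -
  have "ba_filter u" "bot \<notin> u" using assms unfolding Ul_def ultrafilter_def proper_filter_def by auto
  then have "inf a (- a) \<in> u" using assms unfolding ba_filter_def by blast
  then show False using \<open>bot \<notin> u\<close> by simp
qed

lemma ultra_filter: "u \<in> Ul \<Longrightarrow> ba_filter u"
  unfolding Ul_def ultrafilter_def proper_filter_def by auto

lemma ultra_up: "u \<in> Ul \<Longrightarrow> a \<in> u \<Longrightarrow> a \<le> b \<Longrightarrow> b \<in> u"
  using ultra_filter unfolding ba_filter_def by blast

lemma agree:
  assumes "u \<in> Ul" "w \<in> Ul" "u \<inter> B \<subseteq> w" "\<forall>b\<in>B. - b \<in> B"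
  shows "u \<inter> B = w \<inter> B"
proof -
  have "w \<inter> B \<subseteq> u"
  proof
    fix b assume b: "b \<in> w \<inter> B"
    show "b \<in> u"
    proof (rule ccontr)
      assume "b \<notin> u"
      then have "- b \<in> u" using ultra_compl assms(1) by blast
      then have "- b \<in> w" using assms(3,4) b by blast
      then show False using ultra_not_both assms(2) b by blast
    qed
  qed
  then show ?thesis using assms(3) by blast
qed

definition up :: "'a::order set \<Rightarrow> 'a set" where
  "up S = {z. \<exists>s\<in>S. s \<le> z}"

lemma up_single_filter: "ba_filter (up {a::'a::boolean_algebra})"
  unfolding ba_filter_def up_def by auto

lemma mono2:
  assumes "conditional_algebra imp" "b \<le> c" shows "imp a b \<le> imp a c"
proof -
  have "imp a b = imp a (inf b c)" using assms(2) by (simp add: inf_absorb1)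
  also have "\<dots> = inf (imp a b) (imp a c)" using assms(1) unfolding conditional_algebra_def by metis
  finally show ?thesis by (metis inf.orderI)
qed

lemma anti1:
  assumes "conditional_algebra imp" "a \<le> a'" shows "imp a' c \<le> imp a c"
proof -
  have "imp a' c = imp (sup a a') c" using assms(2) by (simp add: sup_absorb2)
  also have "\<dots> \<le> inf (imp a c) (imp a' c)" using assms(1) unfolding conditional_algebra_def by metis
  finally show ?thesis by simp
qed


lemma phi_up: "phi (up {b}) = {w\<in>Ul. b \<in> w}"
  unfolding phi_def up_def using ultra_up by auto

lemma sub_top: "boolean_subalgebra B \<Longrightarrow> top \<in> B"
  unfolding boolean_subalgebra_def by blast
lemma sub_bot: "boolean_subalgebra B \<Longrightarrow> bot \<in> B"
  unfolding boolean_subalgebra_def by blast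
lemma sub_inf: "boolean_subalgebra B \<Longrightarrow> a \<in> B \<Longrightarrow> b \<in> B \<Longrightarrow> inf a b \<in> B"
  unfolding boolean_subalgebra_def by blast
lemma sub_sup: "boolean_subalgebra B \<Longrightarrow> a \<in> B \<Longrightarrow> b \<in> B \<Longrightarrow> sup a b \<in> B"
  unfolding boolean_subalgebra_def by blast
lemma sub_compl: "boolean_subalgebra B \<Longrightarrow> a \<in> B \<Longrightarrow> - a \<in> B"
  unfolding boolean_subalgebra_def by blast

lemma ultra_top: "u \<in> Ul \<Longrightarrow> top \<in> u"
  using ultra_filter unfolding ba_filter_def by blast
lemma ultra_inf: "u \<in> Ul \<Longrightarrow> a \<in> u \<Longrightarrow> b \<in> u \<Longrightarrow> inf a b \<in> u"
  using ultra_filter unfolding ba_filter_def by blast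

lemma meet_closed_uB: "u \<in> Ul \<Longrightarrow> boolean_subalgebra B \<Longrightarrow> meet_closed (u \<inter> B)"
  unfolding meet_closed_def using ultra_top ultra_inf sub_top sub_inf by blast

lemma meet_closed_up: "meet_closed (up {a::'a::boolean_algebra})"
  using filter_meet_closed up_single_filter by blast

lemma up_le: "p \<in> up {c} \<Longrightarrow> c \<le> p"
  unfolding up_def by auto

lemma inf_bot_mono: "inf d p = (bot::'a::boolean_algebra) \<Longrightarrow> c \<le> p \<Longrightarrow> inf d c = bot"
  by (metis bot_unique inf_mono order_refl)

lemma E_sym: "(x, y) \<in> E_B B \<Longrightarrow> (y, x) \<in> E_B B"
  unfolding E_B_def by auto

lemma dir21:
  fixes imp :: "'a::boolean_algebra \<Rightarrow> 'a \<Rightarrow> 'a" and B :: "'a set"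
  assumes ca: "conditional_algebra imp"
    and sb: "boolean_subalgebra B"
    and cl: "\<forall>a\<in>B. \<forall>b\<in>B. imp a b \<in> B"
  shows "C_equivalence Ul stone_closed (T_A imp) (E_B B)"
proof -
  have cB: "\<forall>b\<in>B. - b \<in> B" using sb sub_compl by blast
  have eq: "equiv Ul (E_B B)"
    unfolding equiv_def refl_on_def sym_def trans_def E_B_def by auto
  have sep: "\<exists>S. clopen_in Ul stone_closed S \<and> (\<forall>p q. (p, q) \<in> E_B B \<longrightarrow> p \<in> S \<longrightarrow> q \<in> S)
             \<and> x \<in> S \<and> y \<notin> S" if xy: "x \<in> Ul" "y \<in> Ul" "(x, y) \<notin> E_B B" for x y
  proof -
    have "x \<inter> B \<noteq> y \<inter> B" using xy unfolding E_B_def by auto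
    then have "\<not> x \<inter> B \<subseteq> y" using agree[OF xy(1,2) _ cB] by blast
    then obtain b where b: "b \<in> x" "b \<in> B" "b \<notin> y" by blast
    let ?S = "phi (up {b})"
    have S: "?S = {w\<in>Ul. b \<in> w}" by (rule phi_up)
    have comp: "Ul - ?S = phi (up {- b})"
    proof (rule set_eqI)
      fix w
      show "w \<in> Ul - ?S \<longleftrightarrow> w \<in> phi (up {- b})"
      proof
        assume "w \<in> Ul - ?S"
        then have "w \<in> Ul" "b \<notin> w" using S by auto
        then have "- b \<in> w" using ultra_compl by blast
        then show "w \<in> phi (up {- b})" using phi_up \<open>w \<in> Ul\<close> by auto
      next
        assume "w \<in> phi (up {- b})"
        then have "w \<in> Ul" "- b \<in> w" using phi_up by auto
        then have "b \<notin> w" using ultra_not_both by blast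
        then show "w \<in> Ul - ?S" using S \<open>w \<in> Ul\<close> by auto
      qed
    qed
    have c1: "?S \<subseteq> Ul" unfolding phi_def by auto
    have c2: "stone_closed ?S" unfolding stone_closed_def using up_single_filter by blast
    have c3: "stone_closed (Ul - ?S)" unfolding comp stone_closed_def using up_single_filter by blast
    have cl: "clopen_in Ul stone_closed ?S" unfolding clopen_in_def using c1 c2 c3 by simp
    have inv: "\<forall>p q. (p, q) \<in> E_B B \<longrightarrow> p \<in> ?S \<longrightarrow> q \<in> ?S"
    proof (intro allI impI)
      fix p q assume "(p, q) \<in> E_B B" "p \<in> ?S"
      then have "q \<in> Ul" "p \<inter> B = q \<inter> B" "b \<in> p" using S unfolding E_B_def by auto
      then show "q \<in> ?S" using S b(2) by auto
    qed
    have "x \<in> ?S" "y \<notin> ?S" using S b xy by auto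
    then show ?thesis using cl inv by blast
  qed
  have main: "\<exists>y'\<in>Ul. \<exists>C. (x', y') \<in> E_B B \<and> stone_closed C \<and> T_A imp y C y' \<and> E_below (E_B B) C Y"
    if h: "x \<in> Ul" "x' \<in> Ul" "y \<in> Ul" "(x, y) \<in> E_B B" "T_A imp x Y x'" for x x' y Y
  proof -
    obtain F where F: "ba_filter F" "Y = phi F" "D_imp imp x F \<subseteq> x'"
      using h(5) unfolding T_A_def by blast
    have xyB: "x \<inter> B = y \<inter> B" using h(4) unfolding E_B_def by auto
    define G where "G = up (F \<inter> B)"
    have Fup: "a \<in> F \<Longrightarrow> a \<le> b \<Longrightarrow> b \<in> F" for a b using F(1) unfolding ba_filter_def by blast
    have Ftop: "top \<in> F" using F(1) unfolding ba_filter_def by blast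
    have Finf: "a \<in> F \<Longrightarrow> b \<in> F \<Longrightarrow> inf a b \<in> F" for a b using F(1) unfolding ba_filter_def by blast
    have G: "ba_filter G" unfolding ba_filter_def G_def up_def
    proof (intro conjI)
      show "top \<in> {z. \<exists>s\<in>F \<inter> B. s \<le> z}" using Ftop sub_top[OF sb] by blast
      show "\<forall>a\<in>{z. \<exists>s\<in>F \<inter> B. s \<le> z}. \<forall>b. a \<le> b \<longrightarrow> b \<in> {z. \<exists>s\<in>F \<inter> B. s \<le> z}"
        using order_trans by blast
      show "\<forall>a\<in>{z. \<exists>s\<in>F \<inter> B. s \<le> z}. \<forall>b\<in>{z. \<exists>s\<in>F \<inter> B. s \<le> z}. inf a b \<in> {z. \<exists>s\<in>F \<inter> B. s \<le> z}"
      proof (intro ballI)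
        fix a b assume "a \<in> {z. \<exists>s\<in>F \<inter> B. s \<le> z}" "b \<in> {z. \<exists>s\<in>F \<inter> B. s \<le> z}"
        then obtain s1 s2 where s: "s1 \<in> F \<inter> B" "s1 \<le> a" "s2 \<in> F \<inter> B" "s2 \<le> b" by blast
        have "inf s1 s2 \<in> F \<inter> B" using s Finf sub_inf[OF sb] by blast
        moreover have "inf s1 s2 \<le> inf a b" using s inf_mono by blast
        ultimately show "inf a b \<in> {z. \<exists>s\<in>F \<inter> B. s \<le> z}" by blast
      qed
    qed
    have FBG: "F \<inter> B \<subseteq> G" unfolding G_def up_def by auto
    define C where "C = phi G"
    have Ccl: "stone_closed C" unfolding stone_closed_def C_def using G by blast
    have below: "E_below (E_B B) C Y" unfolding E_below_def
    proof
      fix c assume c: "c \<in> C"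
      then have cU: "c \<in> Ul" and Gc: "G \<subseteq> c" unfolding C_def phi_def by auto
      have "\<forall>p\<in>F. \<forall>q\<in>c \<inter> B. inf p q \<noteq> bot"
      proof (intro ballI notI)
        fix p q assume pq: "p \<in> F" "q \<in> c \<inter> B" "inf p q = bot"
        then have "p \<le> - q" using inf_shunt by blast
        then have "- q \<in> F \<inter> B" using pq Fup cB by blast
        then have "- q \<in> c" using FBG Gc by blast
        then show False using ultra_not_both cU pq by blast
      qed
      then obtain w where w: "w \<in> Ul" "F \<subseteq> w" "c \<inter> B \<subseteq> w"
        using ultra_ext2[OF filter_meet_closed[OF F(1)] meet_closed_uB[OF cU sb]] by blast
      have "c \<inter> B = w \<inter> B" using agree[OF cU w(1) w(3) cB] .
      then have "(w, c) \<in> E_B B" unfolding E_B_def using w cU by auto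
      moreover have "w \<in> Y" using F(2) w unfolding phi_def by blast
      ultimately show "\<exists>w\<in>Y. (w, c) \<in> E_B B" by blast
    qed
    define D where "D = D_imp imp y G"
    have Gup: "a \<in> G \<Longrightarrow> a \<le> b \<Longrightarrow> b \<in> G" for a b using G unfolding ba_filter_def by blast
    have Ginf: "a \<in> G \<Longrightarrow> b \<in> G \<Longrightarrow> inf a b \<in> G" for a b using G unfolding ba_filter_def by blast
    have Gtop: "top \<in> G" using G unfolding ba_filter_def by blast
    have Dmc: "meet_closed D" unfolding meet_closed_def D_def D_imp_def
    proof (intro conjI)
      have "imp top top = top" using ca unfolding conditional_algebra_def by blast
      then show "top \<in> {b. \<exists>a\<in>G. imp a b \<in> y}" using Gtop ultra_top[OF h(3)] by (metis (mono_tags) mem_Collect_eq)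
      show "\<forall>a\<in>{b. \<exists>a\<in>G. imp a b \<in> y}. \<forall>b\<in>{b. \<exists>a\<in>G. imp a b \<in> y}. inf a b \<in> {b. \<exists>a\<in>G. imp a b \<in> y}"
      proof (intro ballI)
        fix d1 d2 assume "d1 \<in> {b. \<exists>a\<in>G. imp a b \<in> y}" "d2 \<in> {b. \<exists>a\<in>G. imp a b \<in> y}"
        then obtain a1 a2 where a: "a1 \<in> G" "imp a1 d1 \<in> y" "a2 \<in> G" "imp a2 d2 \<in> y" by blast
        have "imp (inf a1 a2) d1 \<in> y" using ultra_up[OF h(3) a(2) anti1[OF ca, of "inf a1 a2" a1]] by simp
        moreover have "imp (inf a1 a2) d2 \<in> y" using ultra_up[OF h(3) a(4) anti1[OF ca, of "inf a1 a2" a2]] by simp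
        ultimately have "inf (imp (inf a1 a2) d1) (imp (inf a1 a2) d2) \<in> y" using ultra_inf[OF h(3)] by blast
        then have "imp (inf a1 a2) (inf d1 d2) \<in> y" using ca unfolding conditional_algebra_def by metis
        moreover have "inf a1 a2 \<in> G" using Ginf a by blast
        ultimately show "inf d1 d2 \<in> {b. \<exists>a\<in>G. imp a b \<in> y}" by blast
      qed
    qed
    have "\<forall>p\<in>D. \<forall>q\<in>x' \<inter> B. inf p q \<noteq> bot"
    proof (intro ballI notI)
      fix d q assume dq: "d \<in> D" "q \<in> x' \<inter> B" "inf d q = bot"
      then obtain a where a: "a \<in> G" "imp a d \<in> y" unfolding D_def D_imp_def by blast
      have "d \<le> - q" using dq inf_shunt by blast
      then have "imp a (- q) \<in> y" using ultra_up[OF h(3) a(2) mono2[OF ca]] by blast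
      obtain f where f: "f \<in> F \<inter> B" "f \<le> a" using a(1) unfolding G_def up_def by blast
      have "imp f (- q) \<in> y" using ultra_up[OF h(3) \<open>imp a (- q) \<in> y\<close> anti1[OF ca f(2)]] .
      moreover have "imp f (- q) \<in> B" using cl f cB dq(2) by blast
      ultimately have "imp f (- q) \<in> x" using xyB by blast
      then have "- q \<in> D_imp imp x F" unfolding D_imp_def using f by blast
      then have "- q \<in> x'" using F(3) by blast
      then show False using ultra_not_both h(2) dq(2) by blast
    qed
    then obtain y' where y': "y' \<in> Ul" "D \<subseteq> y'" "x' \<inter> B \<subseteq> y'"
      using ultra_ext2[OF Dmc meet_closed_uB[OF h(2) sb]] by blast
    have "x' \<inter> B = y' \<inter> B" using agree[OF h(2) y'(1) y'(3) cB] .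
    then have "(x', y') \<in> E_B B" unfolding E_B_def using h(2) y'(1) by auto
    moreover have "T_A imp y C y'" unfolding T_A_def using G C_def D_def y'(2) by blast
    ultimately show ?thesis using y'(1) Ccl below by blast
  qed
  have be: "boolean_equivalence Ul stone_closed (E_B B)"
    unfolding boolean_equivalence_def
  proof (intro conjI ballI impI)
    show "equiv Ul (E_B B)" by (rule eq)
    fix x y assume "x \<in> Ul" "y \<in> Ul" "(x, y) \<notin> E_B B"
    then show "\<exists>S. clopen_in Ul stone_closed S \<and> (\<forall>p q. (p, q) \<in> E_B B \<longrightarrow> p \<in> S \<longrightarrow> q \<in> S) \<and> x \<in> S \<and> y \<notin> S"
      by (rule sep)
  qed
  show ?thesis unfolding C_equivalence_def
  proof (intro conjI ballI allI impI)
    show "boolean_equivalence Ul stone_closed (E_B B)" by (rule be)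
    fix x x' y Y assume "x \<in> Ul" "x' \<in> Ul" "y \<in> Ul" "stone_closed Y" "(x, y) \<in> E_B B" "T_A imp x Y x'"
    then show "\<exists>y'\<in>Ul. \<exists>C. (x', y') \<in> E_B B \<and> stone_closed C \<and> T_A imp y C y' \<and> E_below (E_B B) C Y"
      using main by blast
  qed
qed


lemma dir12:
  fixes imp :: "'a::boolean_algebra \<Rightarrow> 'a \<Rightarrow> 'a" and B :: "'a set"
  assumes ca: "conditional_algebra imp"
    and sb: "boolean_subalgebra B"
    and CE: "C_equivalence Ul stone_closed (T_A imp) (E_B B)"
    and aB: "a \<in> B" and bB: "b \<in> B"
  shows "imp a b \<in> B"
proof (rule ccontr)
  assume nc: "imp a b \<notin> B"
  define c where "c = imp a b"
  have cB: "\<forall>b\<in>B. - b \<in> B" using sb sub_compl by blast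
  define Q where "Q = {- b' | b'. b' \<in> B \<and> b' \<le> c}"
  have Qmc: "meet_closed Q" unfolding meet_closed_def Q_def
  proof (intro conjI ballI)
    show "top \<in> {- b' |b'. b' \<in> B \<and> b' \<le> c}" using sub_bot[OF sb]
      by (metis (mono_tags, lifting) bot_least compl_bot_eq mem_Collect_eq)
    fix p q assume "p \<in> {- b' |b'. b' \<in> B \<and> b' \<le> c}" "q \<in> {- b' |b'. b' \<in> B \<and> b' \<le> c}"
    then obtain b1 b2 where bb: "p = - b1" "b1 \<in> B" "b1 \<le> c" "q = - b2" "b2 \<in> B" "b2 \<le> c" by blast
    have "inf p q = - sup b1 b2" using bb by simp
    moreover have "sup b1 b2 \<in> B" using sub_sup[OF sb] bb by blast
    moreover have "sup b1 b2 \<le> c" using bb by simp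
    ultimately show "inf p q \<in> {- b' |b'. b' \<in> B \<and> b' \<le> c}" by blast
  qed
  have "\<forall>p\<in>up {c}. \<forall>q\<in>Q. inf p q \<noteq> bot"
  proof (intro ballI notI)
    fix p q assume pq: "p \<in> up {c}" "q \<in> Q" "inf p q = bot"
    then obtain b' where b': "q = - b'" "b' \<in> B" "b' \<le> c" unfolding Q_def by blast
    have "inf c q = bot" using inf_bot_mono[of q p c] pq up_le by (metis inf_commute)
    then have "c \<le> b'" using inf_shunt b' by (metis double_compl)
    then have "c = b'" using b' by simp
    then show False using nc b' c_def by blast
  qed
  then obtain x0 where x0: "x0 \<in> Ul" "up {c} \<subseteq> x0" "Q \<subseteq> x0"
    using ultra_ext2[OF meet_closed_up Qmc] by blast
  have cx0: "c \<in> x0" using x0 unfolding up_def by auto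
  have x0B: "b' \<in> B \<Longrightarrow> b' \<le> c \<Longrightarrow> b' \<notin> x0" for b'
    using x0(3) ultra_not_both[OF x0(1)] unfolding Q_def by blast
  have "\<forall>p\<in>x0 \<inter> B. \<forall>q\<in>up {- c}. inf p q \<noteq> bot"
  proof (intro ballI notI)
    fix p q assume pq: "p \<in> x0 \<inter> B" "q \<in> up {- c}" "inf p q = bot"
    have "inf p (- c) = bot" using inf_bot_mono pq up_le by blast
    then have "p \<le> c" using inf_shunt by (metis double_compl)
    then show False using x0B pq by blast
  qed
  then obtain y0 where y0: "y0 \<in> Ul" "x0 \<inter> B \<subseteq> y0" "up {- c} \<subseteq> y0"
    using ultra_ext2[OF meet_closed_uB[OF x0(1) sb] meet_closed_up] by blast
  have "- c \<in> y0" using y0 unfolding up_def by auto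
  then have ncy0: "c \<notin> y0" using ultra_not_both y0(1) by blast
  have "x0 \<inter> B = y0 \<inter> B" using agree[OF x0(1) y0(1) y0(2) cB] .
  then have E0: "(y0, x0) \<in> E_B B" unfolding E_B_def using x0 y0 by auto
  define Y where "Y = phi (up {a})"
  have Ycl: "stone_closed Y" unfolding stone_closed_def Y_def using up_single_filter by blast
  define Dy where "Dy = {d. imp a d \<in> y0}"
  have Dymc: "meet_closed Dy" unfolding meet_closed_def Dy_def
  proof (intro conjI ballI)
    have "imp a top = top" using ca unfolding conditional_algebra_def by blast
    then show "top \<in> {d. imp a d \<in> y0}" using ultra_top[OF y0(1)] by simp
    fix p q assume "p \<in> {d. imp a d \<in> y0}" "q \<in> {d. imp a d \<in> y0}"
    then have "inf (imp a p) (imp a q) \<in> y0" using ultra_inf[OF y0(1)] by blast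
    then show "inf p q \<in> {d. imp a d \<in> y0}" using ca unfolding conditional_algebra_def by simp
  qed
  have "\<forall>p\<in>Dy. \<forall>q\<in>up {- b}. inf p q \<noteq> bot"
  proof (intro ballI notI)
    fix p q assume pq: "p \<in> Dy" "q \<in> up {- b}" "inf p q = bot"
    have "inf p (- b) = bot" using inf_bot_mono pq up_le by blast
    then have "p \<le> b" using inf_shunt by (metis double_compl)
    then have "c \<in> y0" using ultra_up[OF y0(1) _ mono2[OF ca]] pq(1) c_def unfolding Dy_def by blast
    then show False using ncy0 by blast
  qed
  then obtain x' where x': "x' \<in> Ul" "Dy \<subseteq> x'" "up {- b} \<subseteq> x'"
    using ultra_ext2[OF Dymc meet_closed_up] by blast
  have nbx': "- b \<in> x'" using x' unfolding up_def by auto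
  have "D_imp imp y0 (up {a}) \<subseteq> x'"
  proof
    fix d assume "d \<in> D_imp imp y0 (up {a})"
    then obtain a' where a': "a \<le> a'" "imp a' d \<in> y0" unfolding D_imp_def up_def by auto
    have "imp a d \<in> y0" using ultra_up[OF y0(1) a'(2) anti1[OF ca a'(1)]] .
    then show "d \<in> x'" using x'(2) unfolding Dy_def by blast
  qed
  then have T0: "T_A imp y0 Y x'" unfolding T_A_def Y_def using up_single_filter by blast
  from CE have "\<exists>y'\<in>Ul. \<exists>C. (x', y') \<in> E_B B \<and> stone_closed C \<and> T_A imp x0 C y' \<and> E_below (E_B B) C Y"
    unfolding C_equivalence_def using y0(1) x'(1) x0(1) Ycl E0 T0 by blast
  then obtain y' C where yC: "y' \<in> Ul" "(x', y') \<in> E_B B" "T_A imp x0 C y'" "E_below (E_B B) C Y" by blast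
  then obtain F' where F': "ba_filter F'" "C = phi F'" "D_imp imp x0 F' \<subseteq> y'" unfolding T_A_def by blast
  have aF': "a \<in> F'"
  proof (rule ccontr)
    assume naF: "a \<notin> F'"
    have "\<forall>p\<in>F'. \<forall>q\<in>up {- a}. inf p q \<noteq> bot"
    proof (intro ballI notI)
      fix p q assume pq: "p \<in> F'" "q \<in> up {- a}" "inf p q = bot"
      have "inf p (- a) = bot" using inf_bot_mono pq up_le by blast
      then have "p \<le> a" using inf_shunt by (metis double_compl)
      then show False using naF pq F'(1) unfolding ba_filter_def by blast
    qed
    then obtain w where w: "w \<in> Ul" "F' \<subseteq> w" "up {- a} \<subseteq> w"
      using ultra_ext2[OF filter_meet_closed[OF F'(1)] meet_closed_up] by blast
    have "- a \<in> w" using w unfolding up_def by auto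
    have "w \<in> C" using F'(2) w unfolding phi_def by blast
    then obtain z where z: "z \<in> Y" "(z, w) \<in> E_B B" using yC(4) unfolding E_below_def by blast
    have "a \<in> z" using z(1) unfolding Y_def phi_up by blast
    then have "a \<in> w" using z(2) aB unfolding E_B_def by blast
    then show False using ultra_not_both w(1) \<open>- a \<in> w\<close> by blast
  qed
  have "b \<in> D_imp imp x0 F'" unfolding D_imp_def using aF' cx0 c_def by blast
  then have "b \<in> y'" using F'(3) by blast
  then have "b \<in> x'" using yC(2) bB unfolding E_B_def by blast
  then show False using ultra_not_both x'(1) nbx' by blast
qed

theorem theorem7p5:
  fixes imp :: "'a::boolean_algebra \<Rightarrow> 'a \<Rightarrow> 'a" and B :: "'a set"
  assumes "conditional_algebra imp"
    and "boolean_subalgebra B"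
  shows "C_equivalence Ul stone_closed (T_A imp) (E_B B) \<longleftrightarrow>
         (\<forall>a\<in>B. \<forall>b\<in>B. imp a b \<in> B)"
  using dir12[OF assms] dir21[OF assms] by blast

end
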